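(* Let $S$ be a finite set, $G$ a finite group and $f:S\to G$ a function. Let $\{\rho\}$ be a complete set of representatives of the equivalence classes of irreducible unitary representations $\rho: G\to U(V_\rho)$, and for each $\rho$ let $P_\rho$ be an orthogonal projector on $V_\rho$, with at least one $P_\rho\neq 0$. Let $\phi=\sum_\rho c_\rho\,\rho^\dagger(P_\rho)\in\mathbb{C}[G]$ with all $c_\rho\in\mathbb{C}$ nonzero. Let $u_S=|S|^{-1/2}\sum_{s\in S}|s\rangle$, let $U_f$ be the unitary on $\mathbb{C}[S]\otimes\mathbb{C}[G]$ with $U_f(|s\rangle\otimes|g\rangle)=|s\rangle\otimes|f(s)g\rangle$, and let $\psi=U_f(u_S\otimes\phi)$. (a) If $f$ is $P_\rho$-constant, then $\psi=u_S\otimes\chi$ for some nonzero $\chi\in\mathbb{C}[G]$; in particular a projective measurement of the first factor onto the span of $u_S$ succeeds with probability 1. (b) If $f$ is $P_\rho$-balanced, then $(\langle u_S|\otimes\mathrm{id})\psi=0$; in particular that measurement succeeds with probability 0.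
   Context: For a finite set $X$, $\mathbb{C}[X]$ is the Hilbert space with orthonormal basis $\{|x\rangle: x\in X\}$; $\mathbb{C}[G]$ is also the group algebra. Each $\rho$ is extended linearly to $\rho:\mathbb{C}[G]\to\mathrm{End}(V_\rho)$, where $\mathrm{End}(V_\rho)$ carries the Hilbert–Schmidt inner product, and $\rho^\dagger(M)=\sum_{h\in G}\mathrm{Tr}(\rho(h)^\dagger M)|h\rangle$ is its adjoint. Definitions: $f$ is $P_\rho$-balanced if $\sum_{s\in S}\rho(f(s))P_\rho=0$ for every $\rho$; $f$ is $P_\rho$-constant if for every $\rho$ there is $x_\rho\in\mathrm{End}(V_\rho)$ with $\rho(f(s))P_\rho=x_\rho$ for all $s\in S$. (For $G=\mathbb{Z}_2$, $P_{\text{trivial}}=0$ and $P_{\text{sign}}=\mathrm{id}$ this recovers the usual constant/balanced functions and the Deutsch–Jozsa algorithm.) *)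

theory Defs
  imports "Jordan_Normal_Form.Matrix" "HOL-Algebra.Group"
begin

definition cadj :: "complex mat \<Rightarrow> complex mat" where
  "cadj M = mat (dim_col M) (dim_row M) (\<lambda>(i, j). cnj (M $$ (j, i)))"

definition mtrace :: "complex mat \<Rightarrow> complex" where
  "mtrace M = (\<Sum>i<dim_row M. M $$ (i, i))"

definition unitary_mat :: "nat \<Rightarrow> complex mat \<Rightarrow> bool" where
  "unitary_mat d U \<longleftrightarrow> U \<in> carrier_mat d d \<and> cadj U * U = 1\<^sub>m d \<and> U * cadj U = 1\<^sub>m d"

definition orth_projector :: "nat \<Rightarrow> complex mat \<Rightarrow> bool" where
  "orth_projector d P \<longleftrightarrow> P \<in> carrier_mat d d \<and> P * P = P \<and> cadj P = P"

definition msum :: "nat \<Rightarrow> ('s \<Rightarrow> complex mat) \<Rightarrow> 's set \<Rightarrow> complex mat" where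
  "msum d A S = mat d d (\<lambda>(i, j). \<Sum>s\<in>S. A s $$ (i, j))"

definition csubspace_vec :: "nat \<Rightarrow> complex vec set \<Rightarrow> bool" where
  "csubspace_vec d W \<longleftrightarrow> W \<subseteq> carrier_vec d \<and> 0\<^sub>v d \<in> W \<and>
     (\<forall>v\<in>W. \<forall>w\<in>W. v + w \<in> W) \<and> (\<forall>a::complex. \<forall>v\<in>W. a \<cdot>\<^sub>v v \<in> W)"

definition unitary_rep :: "('g, 'b) monoid_scheme \<Rightarrow> nat \<Rightarrow> ('g \<Rightarrow> complex mat) \<Rightarrow> bool" where
  "unitary_rep G d \<rho> \<longleftrightarrow> 0 < d \<and> (\<forall>g\<in>carrier G. unitary_mat d (\<rho> g)) \<and>
     (\<forall>g\<in>carrier G. \<forall>h\<in>carrier G. \<rho> (g \<otimes>\<^bsub>G\<^esub> h) = \<rho> g * \<rho> h)"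

definition irreducible_unitary_rep :: "('g, 'b) monoid_scheme \<Rightarrow> nat \<Rightarrow> ('g \<Rightarrow> complex mat) \<Rightarrow> bool" where
  "irreducible_unitary_rep G d \<rho> \<longleftrightarrow> unitary_rep G d \<rho> \<and>
     (\<forall>W. csubspace_vec d W \<and> (\<forall>g\<in>carrier G. \<forall>w\<in>W. \<rho> g *\<^sub>v w \<in> W)
          \<longrightarrow> W = {0\<^sub>v d} \<or> W = carrier_vec d)"

definition rep_equiv :: "('g, 'b) monoid_scheme \<Rightarrow> nat \<Rightarrow> ('g \<Rightarrow> complex mat) \<Rightarrow> nat \<Rightarrow> ('g \<Rightarrow> complex mat) \<Rightarrow> bool" where
  "rep_equiv G d \<rho> d' \<rho>' \<longleftrightarrow> d = d' \<and> (\<exists>T. T \<in> carrier_mat d d \<and> invertible_mat T \<and>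
     (\<forall>g\<in>carrier G. T * \<rho> g = \<rho>' g * T))"

text \<open>R is a complete set of representatives of the equivalence classes of irreducible unitary
  representations of G; dimV \<rho> is the dimension of V_\<rho>.\<close>
definition complete_irreps :: "('g, 'b) monoid_scheme \<Rightarrow> ('g \<Rightarrow> complex mat) set \<Rightarrow> (('g \<Rightarrow> complex mat) \<Rightarrow> nat) \<Rightarrow> bool" where
  "complete_irreps G R dimV \<longleftrightarrow>
     (\<forall>\<rho>\<in>R. irreducible_unitary_rep G (dimV \<rho>) \<rho>) \<and>
     (\<forall>\<rho>\<in>R. \<forall>\<rho>'\<in>R. rep_equiv G (dimV \<rho>) \<rho> (dimV \<rho>') \<rho>' \<longrightarrow> \<rho> = \<rho>') \<and>
     (\<forall>d \<sigma>. irreducible_unitary_rep G d \<sigma> \<longrightarrow> (\<exists>\<rho>\<in>R. rep_equiv G d \<sigma> (dimV \<rho>) \<rho>))"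

definition rho_dag :: "('g, 'b) monoid_scheme \<Rightarrow> ('g \<Rightarrow> complex mat) \<Rightarrow> complex mat \<Rightarrow> ('g \<Rightarrow> complex)" where
  "rho_dag G \<rho> M = (\<lambda>h. if h \<in> carrier G then mtrace (cadj (\<rho> h) * M) else 0)"

definition uS :: "'s set \<Rightarrow> ('s \<Rightarrow> complex)" where
  "uS S = (\<lambda>s. if s \<in> S then complex_of_real (1 / sqrt (real (card S))) else 0)"

definition tensor :: "('s \<Rightarrow> complex) \<Rightarrow> ('g \<Rightarrow> complex) \<Rightarrow> ('s \<times> 'g \<Rightarrow> complex)" where
  "tensor u v = (\<lambda>(s, g). u s * v g)"

text \<open>U_f (|s> \<otimes> |g>) = |s> \<otimes> |f(s) g>, i.e. (U_f \<Psi>)(s, g) = \<Psi>(s, f(s)^{-1} g).\<close>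
definition Uf :: "('g, 'b) monoid_scheme \<Rightarrow> 's set \<Rightarrow> ('s \<Rightarrow> 'g) \<Rightarrow> ('s \<times> 'g \<Rightarrow> complex) \<Rightarrow> ('s \<times> 'g \<Rightarrow> complex)" where
  "Uf G S f \<Psi> = (\<lambda>(s, g). if s \<in> S \<and> g \<in> carrier G then \<Psi> (s, inv\<^bsub>G\<^esub> (f s) \<otimes>\<^bsub>G\<^esub> g) else 0)"

text \<open>(<u| \<otimes> id) \<Psi>, the partial inner product with u on the first factor.\<close>
definition partial_bra :: "'s set \<Rightarrow> ('s \<Rightarrow> complex) \<Rightarrow> ('s \<times> 'g \<Rightarrow> complex) \<Rightarrow> ('g \<Rightarrow> complex)" where
  "partial_bra S u \<Psi> = (\<lambda>g. \<Sum>s\<in>S. cnj (u s) * \<Psi> (s, g))"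

text \<open>Probability that the projective measurement of the first factor onto span(u_S)
  succeeds on state \<Psi>: ||(<u_S| \<otimes> id)\<Psi>||^2 / ||\<Psi>||^2.\<close>
definition success_prob :: "('g, 'b) monoid_scheme \<Rightarrow> 's set \<Rightarrow> ('s \<times> 'g \<Rightarrow> complex) \<Rightarrow> real" where
  "success_prob G S \<Psi> =
     (\<Sum>g\<in>carrier G. (cmod (partial_bra S (uS S) \<Psi> g))\<^sup>2) /
     (\<Sum>x\<in>S \<times> carrier G. (cmod (\<Psi> x))\<^sup>2)"

definition P_balanced :: "('g \<Rightarrow> complex mat) set \<Rightarrow> (('g \<Rightarrow> complex mat) \<Rightarrow> nat) \<Rightarrow>
    (('g \<Rightarrow> complex mat) \<Rightarrow> complex mat) \<Rightarrow> 's set \<Rightarrow> ('s \<Rightarrow> 'g) \<Rightarrow> bool" where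
  "P_balanced R dimV P S f \<longleftrightarrow>
     (\<forall>\<rho>\<in>R. msum (dimV \<rho>) (\<lambda>s. \<rho> (f s) * P \<rho>) S = 0\<^sub>m (dimV \<rho>) (dimV \<rho>))"

definition P_constant :: "('g \<Rightarrow> complex mat) set \<Rightarrow>
    (('g \<Rightarrow> complex mat) \<Rightarrow> complex mat) \<Rightarrow> 's set \<Rightarrow> ('s \<Rightarrow> 'g) \<Rightarrow> bool" where
  "P_constant R P S f \<longleftrightarrow>
     (\<forall>\<rho>\<in>R. \<exists>x. \<forall>s\<in>S. \<rho> (f s) * P \<rho> = x)"

end

theory Submission
  imports Defs
begin

lemma mult_entry:
  assumes "A \<in> carrier_mat n m" "B \<in> carrier_mat m p" "i < n" "j < p"
  shows "(A * B) $$ (i,j) = (\<Sum>k<m. A $$ (i,k) * B $$ (k,j))"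
  using assms by (simp add: scalar_prod_def lessThan_atLeast0)

lemma mv_entry:
  assumes "A \<in> carrier_mat n m" "v \<in> carrier_vec m" "i < n"
  shows "(A *\<^sub>v v) $ i = (\<Sum>k<m. A $$ (i,k) * v $ k)"
  using assms by (simp add: scalar_prod_def lessThan_atLeast0)

lemma mat_zero_if_kills:
  assumes T: "(T::complex mat) \<in> carrier_mat e d" and k: "\<forall>v\<in>carrier_vec d. T *\<^sub>v v = 0\<^sub>v e"
  shows "T = 0\<^sub>m e d"
proof (rule eq_matI)
  fix i j assume ij: "i < dim_row (0\<^sub>m e d :: complex mat)" "j < dim_col (0\<^sub>m e d :: complex mat)"
  have "(T *\<^sub>v unit_vec d j) $ i = 0" using k ij by auto
  moreover have "(T *\<^sub>v unit_vec d j) $ i = T $$ (i,j)"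
    using T ij by (subst mv_entry[OF T], auto simp: unit_vec_def if_distrib cong: if_cong)
  ultimately show "T $$ (i,j) = 0\<^sub>m e d $$ (i,j)" using ij by simp
qed (use T in auto)

lemma mat_id_if_fixes:
  assumes T: "(T::complex mat) \<in> carrier_mat d d" and k: "\<forall>v\<in>carrier_vec d. T *\<^sub>v v = v"
  shows "T = 1\<^sub>m d"
proof (rule eq_matI)
  fix i j assume ij: "i < dim_row (1\<^sub>m d :: complex mat)" "j < dim_col (1\<^sub>m d :: complex mat)"
  have "(T *\<^sub>v unit_vec d j) $ i = unit_vec d j $ i" using k ij by auto
  moreover have "(T *\<^sub>v unit_vec d j) $ i = T $$ (i,j)"
    using T ij by (subst mv_entry[OF T], auto simp: unit_vec_def if_distrib cong: if_cong)
  ultimately show "T $$ (i,j) = 1\<^sub>m d $$ (i,j)" using ij by simp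
qed (use T in auto)

lemma mv_zero: "(T::complex mat) \<in> carrier_mat e d \<Longrightarrow> T *\<^sub>v 0\<^sub>v d = 0\<^sub>v e"
  by (intro eq_vecI) (auto simp: mv_entry)

lemma rep_carrier: "unitary_rep G d \<rho> \<Longrightarrow> g \<in> carrier G \<Longrightarrow> \<rho> g \<in> carrier_mat d d"
  by (auto simp: unitary_rep_def unitary_mat_def)

lemma schur1:
  assumes irr_r: "irreducible_unitary_rep G d \<rho>" and irr_s: "irreducible_unitary_rep G e \<sigma>"
    and T: "(T::complex mat) \<in> carrier_mat e d" and int: "\<forall>g\<in>carrier G. \<sigma> g * T = T * \<rho> g"
    and nz: "T \<noteq> 0\<^sub>m e d"
  shows "rep_equiv G d \<rho> e \<sigma>"
proof -
  have rc: "\<And>g. g \<in> carrier G \<Longrightarrow> \<rho> g \<in> carrier_mat d d"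
    using irr_r rep_carrier by (auto simp: irreducible_unitary_rep_def)
  have sc: "\<And>g. g \<in> carrier G \<Longrightarrow> \<sigma> g \<in> carrier_mat e e"
    using irr_s rep_carrier by (auto simp: irreducible_unitary_rep_def)
  define K where "K = {v \<in> carrier_vec d. T *\<^sub>v v = 0\<^sub>v e}"
  have "csubspace_vec d K"
    unfolding csubspace_vec_def K_def using T
    by (auto simp: mv_zero mult_add_distrib_mat_vec mult_mat_vec)
  moreover have "\<forall>g\<in>carrier G. \<forall>w\<in>K. \<rho> g *\<^sub>v w \<in> K"
  proof (intro ballI)
    fix g w assume g: "g \<in> carrier G" and w: "w \<in> K"
    have "T *\<^sub>v (\<rho> g *\<^sub>v w) = (T * \<rho> g) *\<^sub>v w" using T rc[OF g] w by (simp add: K_def)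
    also have "\<dots> = (\<sigma> g * T) *\<^sub>v w" using int g by simp
    also have "\<dots> = \<sigma> g *\<^sub>v (T *\<^sub>v w)" using T sc[OF g] w by (simp add: K_def)
    also have "\<dots> = 0\<^sub>v e" using w sc[OF g] mv_zero by (simp add: K_def)
    finally show "\<rho> g *\<^sub>v w \<in> K" using w rc[OF g] by (simp add: K_def)
  qed
  ultimately have "K = {0\<^sub>v d} \<or> K = carrier_vec d"
    using irr_r unfolding irreducible_unitary_rep_def by blast
  moreover have "K \<noteq> carrier_vec d"
    using mat_zero_if_kills[OF T] nz unfolding K_def by blast
  ultimately have K0: "K = {0\<^sub>v d}" by blast
  have inj: "x = y" if "x \<in> carrier_vec d" "y \<in> carrier_vec d" "T *\<^sub>v x = T *\<^sub>v y" for x y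
  proof -
    have "T *\<^sub>v (x - y) = 0\<^sub>v e"
      using that T by (simp add: mult_minus_distrib_mat_vec)
    then have "x - y \<in> K" using that by (simp add: K_def)
    then have "x - y = 0\<^sub>v d" using K0 by blast
    note xy0 = this
    show ?thesis
    proof (rule eq_vecI)
      fix i assume i: "i < dim_vec y"
      have "(x - y) $ i = 0" using xy0 i that by simp
      then show "x $ i = y $ i" using i that by simp
    qed (use that in simp)
  qed
  define I where "I = (\<lambda>v. T *\<^sub>v v) ` carrier_vec d"
  have "csubspace_vec e I"
    unfolding csubspace_vec_def I_def using T
  proof (intro conjI ballI allI)
    show "(*\<^sub>v) T ` carrier_vec d \<subseteq> carrier_vec e" using T by auto
    show "0\<^sub>v e \<in> (*\<^sub>v) T ` carrier_vec d" using mv_zero[OF T] by (metis image_eqI zero_carrier_vec)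
  next
    fix v w assume "v \<in> (*\<^sub>v) T ` carrier_vec d" "w \<in> (*\<^sub>v) T ` carrier_vec d"
    then obtain x y where "x \<in> carrier_vec d" "y \<in> carrier_vec d" "v = T *\<^sub>v x" "w = T *\<^sub>v y" by auto
    then show "v + w \<in> (*\<^sub>v) T ` carrier_vec d" using T
      by (metis add_carrier_vec image_eqI mult_add_distrib_mat_vec)
  next
    fix a :: complex and v assume "v \<in> (*\<^sub>v) T ` carrier_vec d"
    then obtain x where "x \<in> carrier_vec d" "v = T *\<^sub>v x" by auto
    then show "a \<cdot>\<^sub>v v \<in> (*\<^sub>v) T ` carrier_vec d" using T
      by (metis image_eqI mult_mat_vec smult_carrier_vec)
  qed
  moreover have "\<forall>g\<in>carrier G. \<forall>w\<in>I. \<sigma> g *\<^sub>v w \<in> I"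
  proof (intro ballI)
    fix g w assume g: "g \<in> carrier G" and w: "w \<in> I"
    then obtain x where x: "x \<in> carrier_vec d" "w = T *\<^sub>v x" by (auto simp: I_def)
    have "\<sigma> g *\<^sub>v w = (\<sigma> g * T) *\<^sub>v x" using x T sc[OF g] by simp
    also have "\<dots> = (T * \<rho> g) *\<^sub>v x" using int g by simp
    also have "\<dots> = T *\<^sub>v (\<rho> g *\<^sub>v x)" using x T rc[OF g] by simp
    finally show "\<sigma> g *\<^sub>v w \<in> I" using x rc[OF g] by (auto simp: I_def)
  qed
  ultimately have "I = {0\<^sub>v e} \<or> I = carrier_vec e"
    using irr_s unfolding irreducible_unitary_rep_def by blast
  moreover have "I \<noteq> {0\<^sub>v e}"
    using mat_zero_if_kills[OF T] nz unfolding I_def by blast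
  ultimately have I1: "I = carrier_vec e" by blast
  have "\<forall>j. \<exists>v. j < e \<longrightarrow> v \<in> carrier_vec d \<and> T *\<^sub>v v = unit_vec e j"
    using I1 unfolding I_def by (metis imageE unit_vec_carrier)
  then obtain V where V: "\<And>j. j < e \<Longrightarrow> V j \<in> carrier_vec d \<and> T *\<^sub>v V j = unit_vec e j"
    by metis
  define B where "B = mat d e (\<lambda>(i,j). V j $ i)"
  have B: "B \<in> carrier_mat d e" by (simp add: B_def)
  have colB: "col B j = V j" if "j < e" for j
    using V[OF that] that by (auto simp: B_def)
  have TB: "T * B = 1\<^sub>m e"
  proof (rule eq_matI)
    fix i j assume ij: "i < dim_row (1\<^sub>m e :: complex mat)" "j < dim_col (1\<^sub>m e :: complex mat)"
    have "(T * B) $$ (i,j) = row T i \<bullet> V j" using ij T B colB by simp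
    also have "\<dots> = (T *\<^sub>v V j) $ i" using ij T by simp
    also have "\<dots> = 1\<^sub>m e $$ (i,j)" using V ij by auto
    finally show "(T * B) $$ (i,j) = 1\<^sub>m e $$ (i,j)" .
  qed (use T B in auto)
  have BT: "B * T = 1\<^sub>m d"
  proof (rule mat_id_if_fixes)
    show "B * T \<in> carrier_mat d d" using B T by simp
    show "\<forall>v\<in>carrier_vec d. (B * T) *\<^sub>v v = v"
    proof
      fix v :: "complex vec" assume v: "v \<in> carrier_vec d"
      have "T *\<^sub>v ((B * T) *\<^sub>v v) = (T * (B * T)) *\<^sub>v v"
        by (rule assoc_mult_mat_vec[OF T mult_carrier_mat[OF B T] v, symmetric])
      also have "\<dots> = ((T * B) * T) *\<^sub>v v" using assoc_mult_mat[OF T B T] by simp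
      also have "\<dots> = T *\<^sub>v v" using TB T by simp
      finally show "(B * T) *\<^sub>v v = v" using inj v B T by (metis mult_carrier_mat mult_mat_vec_carrier)
    qed
  qed
  have "(of_nat e :: complex) = (\<Sum>i<e. (T * B) $$ (i,i))" by (simp add: TB)
  also have "\<dots> = (\<Sum>i<e. \<Sum>k<d. T $$ (i,k) * B $$ (k,i))"
    by (intro sum.cong refl mult_entry[OF T B]) auto
  also have "\<dots> = (\<Sum>k<d. \<Sum>i<e. B $$ (k,i) * T $$ (i,k))"
    by (subst sum.swap) (simp add: mult.commute)
  also have "\<dots> = (\<Sum>k<d. (B * T) $$ (k,k))"
    by (intro sum.cong refl mult_entry[OF B T, symmetric]) auto
  also have "\<dots> = of_nat d" by (simp add: BT)
  finally have de: "d = e" by simp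
  have "invertible_mat T"
    unfolding invertible_mat_def inverts_mat_def using T B TB BT de by auto
  then show ?thesis unfolding rep_equiv_def using de T int by metis
qed

lemma cadj_carrier: "U \<in> carrier_mat d d \<Longrightarrow> cadj U \<in> carrier_mat d d"
  by (auto simp: cadj_def)

lemma rep_one:
  assumes grp: "group G" and r: "unitary_rep G d \<rho>"
  shows "\<rho> \<one>\<^bsub>G\<^esub> = 1\<^sub>m d"
proof -
  have one: "\<one>\<^bsub>G\<^esub> \<in> carrier G" using grp by (simp add: group.is_monoid monoid.one_closed)
  let ?U = "\<rho> \<one>\<^bsub>G\<^esub>"
  have U: "?U \<in> carrier_mat d d" and uu: "cadj ?U * ?U = 1\<^sub>m d"
    using r one by (auto simp: unitary_rep_def unitary_mat_def)
  have "?U = ?U * ?U" using r one grp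
    by (metis group.is_monoid monoid.l_one unitary_rep_def)
  have "1\<^sub>m d = cadj ?U * (?U * ?U)" using uu \<open>?U = ?U * ?U\<close> by simp
  also have "\<dots> = (cadj ?U * ?U) * ?U" using U cadj_carrier[OF U] by simp
  also have "\<dots> = ?U" using uu U by simp
  finally show ?thesis by simp
qed

lemma rep_cadj:
  assumes grp: "group G" and r: "unitary_rep G d \<rho>" and g: "g \<in> carrier G"
  shows "cadj (\<rho> g) = \<rho> (inv\<^bsub>G\<^esub> g)"
proof -
  have ig: "inv\<^bsub>G\<^esub> g \<in> carrier G" using grp g by simp
  have U: "\<rho> g \<in> carrier_mat d d" and uu: "cadj (\<rho> g) * \<rho> g = 1\<^sub>m d"
    using r g by (auto simp: unitary_rep_def unitary_mat_def)
  have V: "\<rho> (inv\<^bsub>G\<^esub> g) \<in> carrier_mat d d" using r ig by (auto simp: unitary_rep_def unitary_mat_def)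
  have gi: "\<rho> g * \<rho> (inv\<^bsub>G\<^esub> g) = 1\<^sub>m d"
    using r g ig rep_one[OF grp r] grp unfolding unitary_rep_def by (metis group.r_inv)
  have "cadj (\<rho> g) = cadj (\<rho> g) * (\<rho> g * \<rho> (inv\<^bsub>G\<^esub> g))" using gi cadj_carrier[OF U] by simp
  also have "\<dots> = (cadj (\<rho> g) * \<rho> g) * \<rho> (inv\<^bsub>G\<^esub> g)" using U V cadj_carrier[OF U] by simp
  also have "\<dots> = \<rho> (inv\<^bsub>G\<^esub> g)" using uu V by simp
  finally show ?thesis .
qed

lemma rep_entry:
  assumes grp: "group G" and r: "unitary_rep G d \<rho>" and g: "g \<in> carrier G" and ik: "i < d" "k < d"
  shows "cnj (\<rho> g $$ (k,i)) = \<rho> (inv\<^bsub>G\<^esub> g) $$ (i,k)"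
proof -
  have U: "\<rho> g \<in> carrier_mat d d" using r g by (auto simp: unitary_rep_def unitary_mat_def)
  have "\<rho> (inv\<^bsub>G\<^esub> g) $$ (i,k) = cadj (\<rho> g) $$ (i,k)" using rep_cadj[OF grp r g] by simp
  also have "\<dots> = cnj (\<rho> g $$ (k,i))" using U ik by (simp add: cadj_def)
  finally show ?thesis by simp
qed

lemma orth:
  assumes grp: "group G" and finG: "finite (carrier G)" and irreps: "complete_irreps G R dimV"
    and r: "\<rho> \<in> R" and s: "\<sigma> \<in> R" and ne: "\<rho> \<noteq> \<sigma>"
    and ab: "a < dimV \<sigma>" "b < dimV \<sigma>" and cy: "c < dimV \<rho>" "y < dimV \<rho>"
  shows "(\<Sum>h\<in>carrier G. \<sigma> h $$ (a,b) * \<rho> (inv\<^bsub>G\<^esub> h) $$ (c,y)) = 0"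
proof -
  interpret group G by (rule grp)
  define e where "e = dimV \<sigma>"
  define d where "d = dimV \<rho>"
  have irr_r: "irreducible_unitary_rep G d \<rho>" and irr_s: "irreducible_unitary_rep G e \<sigma>"
    using irreps r s by (auto simp: complete_irreps_def d_def e_def)
  have ur: "unitary_rep G d \<rho>" and us: "unitary_rep G e \<sigma>"
    using irr_r irr_s by (auto simp: irreducible_unitary_rep_def)
  have rc: "\<And>g. g \<in> carrier G \<Longrightarrow> \<rho> g \<in> carrier_mat d d" by (rule rep_carrier[OF ur])
  have sc: "\<And>g. g \<in> carrier G \<Longrightarrow> \<sigma> g \<in> carrier_mat e e" by (rule rep_carrier[OF us])
  have rh: "\<And>g h. g \<in> carrier G \<Longrightarrow> h \<in> carrier G \<Longrightarrow> \<rho> (g \<otimes>\<^bsub>G\<^esub> h) = \<rho> g * \<rho> h"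
    using ur by (auto simp: unitary_rep_def)
  have sh: "\<And>g h. g \<in> carrier G \<Longrightarrow> h \<in> carrier G \<Longrightarrow> \<sigma> (g \<otimes>\<^bsub>G\<^esub> h) = \<sigma> g * \<sigma> h"
    using us by (auto simp: unitary_rep_def)
  define T where "T = mat e d (\<lambda>(x,z). \<Sum>h\<in>carrier G. \<sigma> h $$ (x,b) * \<rho> (inv\<^bsub>G\<^esub> h) $$ (c,z))"
  have T: "T \<in> carrier_mat e d" by (simp add: T_def)
  have int: "\<forall>g\<in>carrier G. \<sigma> g * T = T * \<rho> g"
  proof
    fix g assume g: "g \<in> carrier G"
    show "\<sigma> g * T = T * \<rho> g"
    proof (rule eq_matI)
      fix x z assume xz: "x < dim_row (T * \<rho> g)" "z < dim_col (T * \<rho> g)"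
      then have x: "x < e" and z: "z < d" using T rc[OF g] by auto
      have "(\<sigma> g * T) $$ (x,z) = (\<Sum>k<e. \<sigma> g $$ (x,k) * (\<Sum>h\<in>carrier G. \<sigma> h $$ (k,b) * \<rho> (inv\<^bsub>G\<^esub> h) $$ (c,z)))"
        using mult_entry[OF sc[OF g] T x z] x z by (simp add: T_def)
      also have "\<dots> = (\<Sum>h\<in>carrier G. (\<Sum>k<e. \<sigma> g $$ (x,k) * \<sigma> h $$ (k,b)) * \<rho> (inv\<^bsub>G\<^esub> h) $$ (c,z))"
        unfolding sum_distrib_left sum_distrib_right mult.assoc by (rule sum.swap)
      also have "\<dots> = (\<Sum>h\<in>carrier G. \<sigma> (g \<otimes>\<^bsub>G\<^esub> h) $$ (x,b) * \<rho> (inv\<^bsub>G\<^esub> h) $$ (c,z))"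
      proof (intro sum.cong refl)
        fix h assume h: "h \<in> carrier G"
        have "(\<sigma> g * \<sigma> h) $$ (x,b) = (\<Sum>k<e. \<sigma> g $$ (x,k) * \<sigma> h $$ (k,b))"
          by (rule mult_entry[OF sc[OF g] sc[OF h] x]) (use ab in \<open>simp add: e_def\<close>)
        then show "(\<Sum>k<e. \<sigma> g $$ (x,k) * \<sigma> h $$ (k,b)) * \<rho> (inv\<^bsub>G\<^esub> h) $$ (c,z) =
          \<sigma> (g \<otimes>\<^bsub>G\<^esub> h) $$ (x,b) * \<rho> (inv\<^bsub>G\<^esub> h) $$ (c,z)"
          using sh[OF g h] by simp
      qed
      finally have L: "(\<sigma> g * T) $$ (x,z) = \<dots>" .
      have "(T * \<rho> g) $$ (x,z) = (\<Sum>k<d. (\<Sum>h\<in>carrier G. \<sigma> h $$ (x,b) * \<rho> (inv\<^bsub>G\<^esub> h) $$ (c,k)) * \<rho> g $$ (k,z))"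
        using mult_entry[OF T rc[OF g] x z] x by (simp add: T_def)
      also have "\<dots> = (\<Sum>h\<in>carrier G. \<sigma> h $$ (x,b) * (\<Sum>k<d. \<rho> (inv\<^bsub>G\<^esub> h) $$ (c,k) * \<rho> g $$ (k,z)))"
        unfolding sum_distrib_left sum_distrib_right mult.assoc by (rule sum.swap)
      also have "\<dots> = (\<Sum>h\<in>carrier G. \<sigma> h $$ (x,b) * \<rho> (inv\<^bsub>G\<^esub> h \<otimes>\<^bsub>G\<^esub> g) $$ (c,z))"
      proof (intro sum.cong refl)
        fix h assume h: "h \<in> carrier G"
        have ih: "inv\<^bsub>G\<^esub> h \<in> carrier G" using h by simp
        have "(\<rho> (inv\<^bsub>G\<^esub> h) * \<rho> g) $$ (c,z) = (\<Sum>k<d. \<rho> (inv\<^bsub>G\<^esub> h) $$ (c,k) * \<rho> g $$ (k,z))"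
          by (rule mult_entry[OF rc[OF ih] rc[OF g] _ z]) (use cy in \<open>simp add: d_def\<close>)
        then show "\<sigma> h $$ (x,b) * (\<Sum>k<d. \<rho> (inv\<^bsub>G\<^esub> h) $$ (c,k) * \<rho> g $$ (k,z)) =
          \<sigma> h $$ (x,b) * \<rho> (inv\<^bsub>G\<^esub> h \<otimes>\<^bsub>G\<^esub> g) $$ (c,z)"
          using rh[OF ih g] by simp
      qed
      also have "\<dots> = (\<Sum>h\<in>carrier G. \<sigma> (g \<otimes>\<^bsub>G\<^esub> h) $$ (x,b) * \<rho> (inv\<^bsub>G\<^esub> (g \<otimes>\<^bsub>G\<^esub> h) \<otimes>\<^bsub>G\<^esub> g) $$ (c,z))"
        by (rule sum.reindex_bij_witness[of _ "\<lambda>h. g \<otimes>\<^bsub>G\<^esub> h" "\<lambda>h. inv\<^bsub>G\<^esub> g \<otimes>\<^bsub>G\<^esub> h"])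
           (auto simp: g m_assoc[symmetric])
      also have "\<dots> = (\<Sum>h\<in>carrier G. \<sigma> (g \<otimes>\<^bsub>G\<^esub> h) $$ (x,b) * \<rho> (inv\<^bsub>G\<^esub> h) $$ (c,z))"
        by (intro sum.cong refl) (simp add: g inv_mult_group m_assoc)
      finally show "(\<sigma> g * T) $$ (x,z) = (T * \<rho> g) $$ (x,z)" using L by simp
    qed (use T sc[OF g] rc[OF g] in auto)
  qed
  have "T = 0\<^sub>m e d"
  proof (rule ccontr)
    assume "T \<noteq> 0\<^sub>m e d"
    then have "rep_equiv G d \<rho> e \<sigma>" using schur1[OF irr_r irr_s T int] by blast
    then have "\<rho> = \<sigma>" using irreps r s unfolding complete_irreps_def d_def e_def by blast
    then show False using ne by simp
  qed
  then have "T $$ (a,y) = 0" using ab cy by (simp add: d_def e_def)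
  then show ?thesis using ab cy by (simp add: T_def d_def e_def)
qed

lemma mtrace_mult:
  assumes "X \<in> carrier_mat n n" "Y \<in> carrier_mat n n"
  shows "mtrace (X * Y) = (\<Sum>i<n. \<Sum>k<n. X $$ (i,k) * Y $$ (k,i))"
proof -
  have "dim_row (X * Y) = n" using assms by simp
  then show ?thesis unfolding mtrace_def
    by (simp only:) (intro sum.cong refl mult_entry[OF assms], auto)
qed

lemma trace_gram:
  assumes A: "A \<in> carrier_mat n n" and nz: "A \<noteq> 0\<^sub>m n n"
  shows "mtrace (cadj A * A) \<noteq> 0"
proof -
  have cA: "cadj A \<in> carrier_mat n n" using A by (rule cadj_carrier)
  have "mtrace (cadj A * A) = (\<Sum>i<n. \<Sum>k<n. cadj A $$ (i,k) * A $$ (k,i))"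
    by (rule mtrace_mult[OF cA A])
  also have "\<dots> = (\<Sum>i<n. \<Sum>k<n. complex_of_real ((cmod (A $$ (k,i)))\<^sup>2))"
    using A by (intro sum.cong refl) (auto simp: cadj_def complex_norm_square[of "A $$ (_,_)"] mult.commute simp del: of_real_power)
  also have "\<dots> = complex_of_real (\<Sum>i<n. \<Sum>k<n. (cmod (A $$ (k,i)))\<^sup>2)" by simp
  finally have eq: "mtrace (cadj A * A) = complex_of_real (\<Sum>i<n. \<Sum>k<n. (cmod (A $$ (k,i)))\<^sup>2)" .
  obtain k i where ki: "k < n" "i < n" "A $$ (k,i) \<noteq> 0"
    using nz A by (metis carrier_matD(1) carrier_matD(2) eq_matI index_zero_mat(1) index_zero_mat(2) index_zero_mat(3))
  have "0 < (cmod (A $$ (k,i)))\<^sup>2" using ki by simp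
  also have "\<dots> \<le> (\<Sum>k<n. (cmod (A $$ (k,i)))\<^sup>2)"
    by (rule member_le_sum) (use ki in auto)
  also have "\<dots> \<le> (\<Sum>i<n. \<Sum>k<n. (cmod (A $$ (k,i)))\<^sup>2)"
    by (rule member_le_sum[where f="\<lambda>i. \<Sum>k<n. (cmod (A $$ (k,i)))\<^sup>2"]) (use ki in \<open>auto intro: sum_nonneg\<close>)
  finally show ?thesis unfolding eq by (simp only: of_real_eq_0_iff)
qed

lemma cross:
  assumes grp: "group G" and finG: "finite (carrier G)" and irreps: "complete_irreps G R dimV"
    and r: "\<rho> \<in> R" and s: "\<sigma> \<in> R" and ne: "\<rho> \<noteq> \<sigma>"
    and A: "A \<in> carrier_mat (dimV \<sigma>) (dimV \<sigma>)" and B: "B \<in> carrier_mat (dimV \<rho>) (dimV \<rho>)"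
  shows "(\<Sum>h\<in>carrier G. cnj (mtrace (cadj (\<sigma> h) * A)) * mtrace (cadj (\<rho> h) * B)) = 0"
proof -
  define e where "e = dimV \<sigma>"
  define d where "d = dimV \<rho>"
  have ur: "unitary_rep G d \<rho>" and us: "unitary_rep G e \<sigma>"
    using irreps r s by (auto simp: complete_irreps_def irreducible_unitary_rep_def d_def e_def)
  have A': "A \<in> carrier_mat e e" and B': "B \<in> carrier_mat d d" using A B by (auto simp: d_def e_def)
  have e1: "cnj (mtrace (cadj (\<sigma> h) * A)) = (\<Sum>i<e. \<Sum>k<e. \<sigma> h $$ (k,i) * cnj (A $$ (k,i)))"
    if h: "h \<in> carrier G" for h
  proof -
    have sc: "\<sigma> h \<in> carrier_mat e e" by (rule rep_carrier[OF us h])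
    have "mtrace (cadj (\<sigma> h) * A) = (\<Sum>i<e. \<Sum>k<e. cadj (\<sigma> h) $$ (i,k) * A $$ (k,i))"
      by (rule mtrace_mult[OF cadj_carrier[OF sc] A'])
    also have "\<dots> = (\<Sum>i<e. \<Sum>k<e. cnj (\<sigma> h $$ (k,i)) * A $$ (k,i))"
      using sc by (intro sum.cong refl) (simp add: cadj_def)
    finally show ?thesis by simp
  qed
  have e2: "mtrace (cadj (\<rho> h) * B) = (\<Sum>j<d. \<Sum>l<d. \<rho> (inv\<^bsub>G\<^esub> h) $$ (j,l) * B $$ (l,j))"
    if h: "h \<in> carrier G" for h
    using mtrace_mult[OF cadj_carrier[OF rep_carrier[OF ur h]] B'] rep_cadj[OF grp ur h] by simp
  have "(\<Sum>h\<in>carrier G. cnj (mtrace (cadj (\<sigma> h) * A)) * mtrace (cadj (\<rho> h) * B))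
     = (\<Sum>h\<in>carrier G. \<Sum>j<d. \<Sum>i<e. \<Sum>l<d. \<Sum>k<e.
          (\<sigma> h $$ (k,i) * \<rho> (inv\<^bsub>G\<^esub> h) $$ (j,l)) * (cnj (A $$ (k,i)) * B $$ (l,j)))"
    by (intro sum.cong refl) (simp add: e1 e2 sum_distrib_left sum_distrib_right mult_ac)
  also have "\<dots> = (\<Sum>j<d. \<Sum>i<e. \<Sum>l<d. \<Sum>k<e. \<Sum>h\<in>carrier G.
          (\<sigma> h $$ (k,i) * \<rho> (inv\<^bsub>G\<^esub> h) $$ (j,l)) * (cnj (A $$ (k,i)) * B $$ (l,j)))"
    by (simp only: sum.swap[of _ "carrier G"])
  also have "\<dots> = 0"
  proof -
    have o: "(\<Sum>h\<in>carrier G. \<sigma> h $$ (k,i) * \<rho> (inv\<^bsub>G\<^esub> h) $$ (j,l)) = 0"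
      if "k < e" "i < e" "j < d" "l < d" for i k j l
      using orth[OF grp finG irreps r s ne] that by (simp add: d_def e_def)
    have o2: "(\<Sum>h\<in>carrier G. (\<sigma> h $$ (k,i) * \<rho> (inv\<^bsub>G\<^esub> h) $$ (j,l)) * (cnj (A $$ (k,i)) * B $$ (l,j))) = 0"
      if "k < e" "i < e" "j < d" "l < d" for i k j l
      by (simp add: sum_distrib_right[symmetric] o that)
    show ?thesis by (simp add: o2)
  qed
  finally show ?thesis .
qed

lemma phi_nz:
  assumes grp: "group G" and finG: "finite (carrier G)" and irreps: "complete_irreps G R dimV"
    and finR: "finite R"
    and proj: "\<forall>\<rho>\<in>R. orth_projector (dimV \<rho>) (P \<rho>)"
    and Pnz: "\<exists>\<rho>\<in>R. P \<rho> \<noteq> 0\<^sub>m (dimV \<rho>) (dimV \<rho>)"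
    and cnz: "\<forall>\<rho>\<in>R. c \<rho> \<noteq> 0"
  shows "\<exists>h\<in>carrier G. (\<Sum>\<rho>\<in>R. c \<rho> * rho_dag G \<rho> (P \<rho>) h) \<noteq> 0"
proof (rule ccontr)
  assume "\<not> ?thesis"
  then have z: "\<And>h. h \<in> carrier G \<Longrightarrow> (\<Sum>\<rho>\<in>R. c \<rho> * rho_dag G \<rho> (P \<rho>) h) = 0" by blast
  obtain \<rho>0 where r0: "\<rho>0 \<in> R" and P0: "P \<rho>0 \<noteq> 0\<^sub>m (dimV \<rho>0) (dimV \<rho>0)" using Pnz by blast
  define d where "d = dimV \<rho>0"
  have ur0: "unitary_rep G d \<rho>0"
    using irreps r0 by (auto simp: complete_irreps_def irreducible_unitary_rep_def d_def)
  have Pc: "\<And>\<rho>. \<rho> \<in> R \<Longrightarrow> P \<rho> \<in> carrier_mat (dimV \<rho>) (dimV \<rho>)"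
    using proj by (auto simp: orth_projector_def)
  define \<psi>0 where "\<psi>0 = (\<lambda>h. mtrace (cadj (\<rho>0 h) * P \<rho>0))"
  define Q where "Q = (\<lambda>\<rho>. \<Sum>h\<in>carrier G. cnj (\<psi>0 h) * mtrace (cadj (\<rho> h) * P \<rho>))"
  have "0 = (\<Sum>h\<in>carrier G. cnj (\<psi>0 h) * (\<Sum>\<rho>\<in>R. c \<rho> * rho_dag G \<rho> (P \<rho>) h))"
    by (simp add: z)
  also have "\<dots> = (\<Sum>h\<in>carrier G. \<Sum>\<rho>\<in>R. c \<rho> * (cnj (\<psi>0 h) * mtrace (cadj (\<rho> h) * P \<rho>)))"
    by (intro sum.cong refl) (simp add: sum_distrib_left rho_dag_def mult_ac)
  also have "\<dots> = (\<Sum>\<rho>\<in>R. c \<rho> * Q \<rho>)"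
    unfolding Q_def by (subst sum.swap) (simp add: sum_distrib_left)
  also have "\<dots> = c \<rho>0 * Q \<rho>0 + (\<Sum>\<rho>\<in>R - {\<rho>0}. c \<rho> * Q \<rho>)"
    by (rule sum.remove[OF finR r0])
  also have "(\<Sum>\<rho>\<in>R - {\<rho>0}. c \<rho> * Q \<rho>) = 0"
  proof (rule sum.neutral, rule ballI)
    fix \<rho> assume "\<rho> \<in> R - {\<rho>0}"
    then have "Q \<rho> = 0" unfolding Q_def \<psi>0_def
      using cross[OF grp finG irreps _ r0 _ Pc[OF r0] Pc] by auto
    then show "c \<rho> * Q \<rho> = 0" by simp
  qed
  finally have eq0: "c \<rho>0 * Q \<rho>0 = 0" by simp
  have one: "\<one>\<^bsub>G\<^esub> \<in> carrier G" using grp by (simp add: group.is_monoid monoid.one_closed)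
  have "cadj (\<rho>0 \<one>\<^bsub>G\<^esub>) = 1\<^sub>m d"
    using rep_cadj[OF grp ur0 one] rep_one[OF grp ur0] grp by (simp add: monoid.inv_one group.is_monoid)
  then have "\<psi>0 \<one>\<^bsub>G\<^esub> = mtrace (P \<rho>0)"
    using Pc[OF r0] by (simp add: \<psi>0_def d_def)
  also have "\<dots> = mtrace (cadj (P \<rho>0) * P \<rho>0)"
    using proj r0 by (simp add: orth_projector_def)
  finally have p1: "\<psi>0 \<one>\<^bsub>G\<^esub> \<noteq> 0" using trace_gram[OF Pc[OF r0] P0] by simp
  have "Q \<rho>0 = (\<Sum>h\<in>carrier G. complex_of_real ((cmod (\<psi>0 h))\<^sup>2))"
    unfolding Q_def by (intro sum.cong refl) (simp add: \<psi>0_def complex_norm_square mult.commute del: of_real_power)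
  also have "\<dots> = complex_of_real (\<Sum>h\<in>carrier G. (cmod (\<psi>0 h))\<^sup>2)" by simp
  finally have Qeq: "Q \<rho>0 = complex_of_real (\<Sum>h\<in>carrier G. (cmod (\<psi>0 h))\<^sup>2)" .
  have "0 < (cmod (\<psi>0 \<one>\<^bsub>G\<^esub>))\<^sup>2" using p1 by simp
  also have "\<dots> \<le> (\<Sum>h\<in>carrier G. (cmod (\<psi>0 h))\<^sup>2)"
    by (rule member_le_sum[OF one]) (auto simp: finG)
  finally have "Q \<rho>0 \<noteq> 0" unfolding Qeq by (simp only: of_real_eq_0_iff)
  then show False using eq0 cnz r0 by simp
qed

lemma shift:
  assumes grp: "group G" and ur: "unitary_rep G d \<rho>" and a: "a \<in> carrier G" and g: "g \<in> carrier G"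
    and M: "M \<in> carrier_mat d d"
  shows "rho_dag G \<rho> M (inv\<^bsub>G\<^esub> a \<otimes>\<^bsub>G\<^esub> g) = mtrace (\<rho> (inv\<^bsub>G\<^esub> g) * (\<rho> a * M))"
proof -
  interpret group G by (rule grp)
  have x: "inv\<^bsub>G\<^esub> a \<otimes>\<^bsub>G\<^esub> g \<in> carrier G" using a g by simp
  have ix: "inv\<^bsub>G\<^esub> (inv\<^bsub>G\<^esub> a \<otimes>\<^bsub>G\<^esub> g) = inv\<^bsub>G\<^esub> g \<otimes>\<^bsub>G\<^esub> a"
    using a g by (simp add: inv_mult_group)
  have "rho_dag G \<rho> M (inv\<^bsub>G\<^esub> a \<otimes>\<^bsub>G\<^esub> g) = mtrace (\<rho> (inv\<^bsub>G\<^esub> g \<otimes>\<^bsub>G\<^esub> a) * M)"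
    using x rep_cadj[OF grp ur x] ix by (simp add: rho_dag_def)
  also have "\<rho> (inv\<^bsub>G\<^esub> g \<otimes>\<^bsub>G\<^esub> a) = \<rho> (inv\<^bsub>G\<^esub> g) * \<rho> a"
    using ur a g by (simp add: unitary_rep_def)
  also have "\<rho> (inv\<^bsub>G\<^esub> g) * \<rho> a * M = \<rho> (inv\<^bsub>G\<^esub> g) * (\<rho> a * M)"
    using rep_carrier[OF ur a] rep_carrier[OF ur, of "inv\<^bsub>G\<^esub> g"] g M by simp
  finally show ?thesis .
qed

lemma uS_sq:
  assumes "finite S" "S \<noteq> {}" "s \<in> S"
  shows "cnj (uS S s) * uS S s = 1 / of_nat (card S)"
    and "(cmod (uS S s))\<^sup>2 = 1 / real (card S)"
proof -
  have n: "card S > 0" using assms card_gt_0_iff by blast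
  have r: "(1 / sqrt (real (card S)))\<^sup>2 = 1 / real (card S)"
    using n by (simp add: power_divide)
  define r0 where "r0 = 1 / sqrt (real (card S))"
  have u: "uS S s = complex_of_real r0" by (simp add: uS_def assms r0_def)
  have rr: "r0 * r0 = 1 / real (card S)" using r by (simp add: r0_def power2_eq_square)
  have "cnj (uS S s) * uS S s = complex_of_real (r0 * r0)"
    unfolding u by (simp only: complex_cnj_complex_of_real of_real_mult)
  then show "cnj (uS S s) * uS S s = 1 / of_nat (card S)" unfolding rr by simp
  have "cmod (uS S s) = \<bar>r0\<bar>" unfolding u by (simp only: norm_of_real)
  then show "(cmod (uS S s))\<^sup>2 = 1 / real (card S)" using rr by (simp add: power2_eq_square)
qed

lemma uS_sum:
  assumes "finite S" "S \<noteq> {}"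
  shows "(\<Sum>s\<in>S. cnj (uS S s) * uS S s) = 1"
    and "(\<Sum>s\<in>S. (cmod (uS S s))\<^sup>2) = 1"
proof -
  have n: "card S > 0" using assms card_gt_0_iff by blast
  show "(\<Sum>s\<in>S. cnj (uS S s) * uS S s) = 1"
    using uS_sq(1)[OF assms] n by simp
  show "(\<Sum>s\<in>S. (cmod (uS S s))\<^sup>2) = 1"
    using uS_sq(2)[OF assms] n by simp
qed

lemma msum_trace:
  assumes Y: "Y \<in> carrier_mat d d" and Z: "\<And>s. s \<in> S \<Longrightarrow> Z s \<in> carrier_mat d d"
  shows "(\<Sum>s\<in>S. mtrace (Y * Z s)) = mtrace (Y * msum d Z S)"
proof -
  have M: "msum d Z S \<in> carrier_mat d d" by (simp add: msum_def)
  have "(\<Sum>s\<in>S. mtrace (Y * Z s)) = (\<Sum>s\<in>S. \<Sum>i<d. \<Sum>k<d. Y $$ (i,k) * Z s $$ (k,i))"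
    by (intro sum.cong refl mtrace_mult[OF Y Z])
  also have "\<dots> = (\<Sum>i<d. \<Sum>k<d. Y $$ (i,k) * msum d Z S $$ (k,i))"
    by (simp add: msum_def sum_distrib_left sum.swap[of _ S])
  also have "\<dots> = mtrace (Y * msum d Z S)" by (rule mtrace_mult[OF Y M, symmetric])
  finally show ?thesis .
qed

lemma mtrace_zero: "Y \<in> carrier_mat d d \<Longrightarrow> mtrace (Y * 0\<^sub>m d d) = 0"
  by (subst mtrace_mult[of _ d]) auto

theorem mainTheorem7:
  fixes G :: "('g, 'b) monoid_scheme"
    and S :: "'s set"
    and f :: "'s \<Rightarrow> 'g"
    and R :: "('g \<Rightarrow> complex mat) set"
    and dimV :: "('g \<Rightarrow> complex mat) \<Rightarrow> nat"
    and P :: "('g \<Rightarrow> complex mat) \<Rightarrow> complex mat"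
    and c :: "('g \<Rightarrow> complex mat) \<Rightarrow> complex"
  assumes grp: "group G"
    and finG: "finite (carrier G)"
    and finS: "finite S"
    and neS: "S \<noteq> {}"
    and f_into: "\<forall>s\<in>S. f s \<in> carrier G"
    and irreps: "complete_irreps G R dimV"
    and finR: "finite R"
    and proj: "\<forall>\<rho>\<in>R. orth_projector (dimV \<rho>) (P \<rho>)"
    and Pnz: "\<exists>\<rho>\<in>R. P \<rho> \<noteq> 0\<^sub>m (dimV \<rho>) (dimV \<rho>)"
    and cnz: "\<forall>\<rho>\<in>R. c \<rho> \<noteq> 0"
  defines "\<psi> \<equiv> Uf G S f (tensor (uS S) (\<lambda>h. \<Sum>\<rho>\<in>R. c \<rho> * rho_dag G \<rho> (P \<rho>) h))"
  shows "(P_constant R P S f \<longrightarrow>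
            (\<exists>\<chi>. (\<exists>g\<in>carrier G. \<chi> g \<noteq> 0) \<and> \<psi> = tensor (uS S) \<chi>) \<and>
            success_prob G S \<psi> = 1)
       \<and> (P_balanced R dimV P S f \<longrightarrow>
            partial_bra S (uS S) \<psi> = (\<lambda>g. 0) \<and> success_prob G S \<psi> = 0)"
proof -
  define \<phi> where "\<phi> = (\<lambda>h. \<Sum>\<rho>\<in>R. c \<rho> * rho_dag G \<rho> (P \<rho>) h)"
  have psi: "\<And>s g. \<psi> (s,g) = (if s \<in> S \<and> g \<in> carrier G then uS S s * \<phi> (inv\<^bsub>G\<^esub> (f s) \<otimes>\<^bsub>G\<^esub> g) else 0)"
    by (simp add: \<psi>_def Uf_def tensor_def \<phi>_def)
  have ur: "\<And>\<rho>. \<rho> \<in> R \<Longrightarrow> unitary_rep G (dimV \<rho>) \<rho>"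
    using irreps by (auto simp: complete_irreps_def irreducible_unitary_rep_def)
  have Pc: "\<And>\<rho>. \<rho> \<in> R \<Longrightarrow> P \<rho> \<in> carrier_mat (dimV \<rho>) (dimV \<rho>)"
    using proj by (auto simp: orth_projector_def)
  have phis: "\<phi> (inv\<^bsub>G\<^esub> (f s) \<otimes>\<^bsub>G\<^esub> g) = (\<Sum>\<rho>\<in>R. c \<rho> * mtrace (\<rho> (inv\<^bsub>G\<^esub> g) * (\<rho> (f s) * P \<rho>)))"
    if s: "s \<in> S" and g: "g \<in> carrier G" for s g
    unfolding \<phi>_def
    by (intro sum.cong refl) (simp add: shift[OF grp ur f_into[rule_format, OF s] g Pc])
  have finSG: "finite (S \<times> carrier G)" using finS finG by simp
  have den: "(\<Sum>x\<in>S \<times> carrier G. (cmod (tensor (uS S) \<chi> x))\<^sup>2) = (\<Sum>g\<in>carrier G. (cmod (\<chi> g))\<^sup>2)"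
    for \<chi> :: "'g \<Rightarrow> complex"
  proof -
    have "(\<Sum>x\<in>S \<times> carrier G. (cmod (tensor (uS S) \<chi> x))\<^sup>2)
        = (\<Sum>s\<in>S. \<Sum>g\<in>carrier G. (cmod (uS S s))\<^sup>2 * (cmod (\<chi> g))\<^sup>2)"
      unfolding sum.cartesian_product tensor_def
      by (intro sum.cong refl) (auto simp: norm_mult power_mult_distrib)
    also have "\<dots> = (\<Sum>s\<in>S. (cmod (uS S s))\<^sup>2) * (\<Sum>g\<in>carrier G. (cmod (\<chi> g))\<^sup>2)"
      by (rule sum_product[symmetric])
    also have "\<dots> = (\<Sum>g\<in>carrier G. (cmod (\<chi> g))\<^sup>2)" by (simp add: uS_sum(2)[OF finS neS])
    finally show ?thesis .
  qed
  have A: "P_constant R P S f \<longrightarrow>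
            (\<exists>\<chi>. (\<exists>g\<in>carrier G. \<chi> g \<noteq> 0) \<and> \<psi> = tensor (uS S) \<chi>) \<and>
            success_prob G S \<psi> = 1"
  proof
    assume pc: "P_constant R P S f"
    then obtain X where X: "\<And>\<rho> s. \<rho> \<in> R \<Longrightarrow> s \<in> S \<Longrightarrow> \<rho> (f s) * P \<rho> = X \<rho>"
      unfolding P_constant_def by metis
    obtain s0 where s0: "s0 \<in> S" using neS by blast
    define \<chi> where "\<chi> = (\<lambda>g. if g \<in> carrier G then \<phi> (inv\<^bsub>G\<^esub> (f s0) \<otimes>\<^bsub>G\<^esub> g) else 0)"
    have same: "\<phi> (inv\<^bsub>G\<^esub> (f s) \<otimes>\<^bsub>G\<^esub> g) = \<phi> (inv\<^bsub>G\<^esub> (f s0) \<otimes>\<^bsub>G\<^esub> g)"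
      if "s \<in> S" "g \<in> carrier G" for s g
      using phis[OF that] phis[OF s0 that(2)] X that s0 by simp
    have psiT: "\<psi> = tensor (uS S) \<chi>"
    proof
      fix x show "\<psi> x = tensor (uS S) \<chi> x"
        by (cases x) (auto simp: psi tensor_def \<chi>_def uS_def same)
    qed
    obtain h where h: "h \<in> carrier G" "\<phi> h \<noteq> 0"
      using phi_nz[OF grp finG irreps finR proj Pnz cnz] unfolding \<phi>_def by blast
    have fs0: "f s0 \<in> carrier G" using f_into s0 by blast
    have "inv\<^bsub>G\<^esub> (f s0) \<otimes>\<^bsub>G\<^esub> (f s0 \<otimes>\<^bsub>G\<^esub> h) = h"
    proof -
      interpret group G by (rule grp)
      show ?thesis using fs0 h(1) by (simp add: m_assoc[symmetric])
    qed
    then have chinz: "\<chi> (f s0 \<otimes>\<^bsub>G\<^esub> h) \<noteq> 0" "f s0 \<otimes>\<^bsub>G\<^esub> h \<in> carrier G"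
      using h fs0 grp by (auto simp: \<chi>_def group.is_monoid monoid.m_closed)
    have pb: "partial_bra S (uS S) \<psi> = \<chi>"
    proof
      fix g
      have "partial_bra S (uS S) \<psi> g = (\<Sum>s\<in>S. cnj (uS S s) * uS S s) * \<chi> g"
        by (simp add: partial_bra_def psiT tensor_def sum_distrib_right mult.assoc)
      then show "partial_bra S (uS S) \<psi> g = \<chi> g" by (simp add: uS_sum(1)[OF finS neS])
    qed
    have "0 < (cmod (\<chi> (f s0 \<otimes>\<^bsub>G\<^esub> h)))\<^sup>2" using chinz by simp
    also have "\<dots> \<le> (\<Sum>g\<in>carrier G. (cmod (\<chi> g))\<^sup>2)"
      by (rule member_le_sum[OF chinz(2)]) (auto simp: finG)
    finally have N: "0 < (\<Sum>g\<in>carrier G. (cmod (\<chi> g))\<^sup>2)" .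
    have "success_prob G S \<psi> = 1"
      unfolding success_prob_def pb using N by (simp add: psiT den)
    then show "(\<exists>\<chi>. (\<exists>g\<in>carrier G. \<chi> g \<noteq> 0) \<and> \<psi> = tensor (uS S) \<chi>) \<and> success_prob G S \<psi> = 1"
      using psiT chinz by blast
  qed
  have B: "P_balanced R dimV P S f \<longrightarrow> partial_bra S (uS S) \<psi> = (\<lambda>g. 0) \<and> success_prob G S \<psi> = 0"
  proof
    assume bal: "P_balanced R dimV P S f"
    have pb: "partial_bra S (uS S) \<psi> = (\<lambda>g. 0)"
    proof
      fix g
      show "partial_bra S (uS S) \<psi> g = 0"
      proof (cases "g \<in> carrier G")
        case False
        then show ?thesis by (simp add: partial_bra_def psi)
      next
        case g: True
        have ig: "inv\<^bsub>G\<^esub> g \<in> carrier G" using grp g by (simp add: group.inv_closed)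
        have "partial_bra S (uS S) \<psi> g = (\<Sum>s\<in>S. (1 / of_nat (card S)) * \<phi> (inv\<^bsub>G\<^esub> (f s) \<otimes>\<^bsub>G\<^esub> g))"
          unfolding partial_bra_def
          by (intro sum.cong refl) (simp add: psi g mult.assoc[symmetric] uS_sq(1)[OF finS neS])
        also have "\<dots> = (1 / of_nat (card S)) * (\<Sum>\<rho>\<in>R. c \<rho> * (\<Sum>s\<in>S. mtrace (\<rho> (inv\<^bsub>G\<^esub> g) * (\<rho> (f s) * P \<rho>))))"
          by (simp add: sum_distrib_left phis g sum.swap[of _ S])
        also have "(\<Sum>\<rho>\<in>R. c \<rho> * (\<Sum>s\<in>S. mtrace (\<rho> (inv\<^bsub>G\<^esub> g) * (\<rho> (f s) * P \<rho>)))) = 0"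
        proof (rule sum.neutral, rule ballI)
          fix \<rho> assume r: "\<rho> \<in> R"
          have "(\<Sum>s\<in>S. mtrace (\<rho> (inv\<^bsub>G\<^esub> g) * (\<rho> (f s) * P \<rho>)))
              = mtrace (\<rho> (inv\<^bsub>G\<^esub> g) * msum (dimV \<rho>) (\<lambda>s. \<rho> (f s) * P \<rho>) S)"
            by (rule msum_trace[OF rep_carrier[OF ur[OF r] ig]])
               (use rep_carrier[OF ur[OF r]] f_into Pc[OF r] in \<open>metis mult_carrier_mat\<close>)
          also have "\<dots> = 0" using bal r mtrace_zero[OF rep_carrier[OF ur[OF r] ig]]
            by (simp add: P_balanced_def)
          finally show "c \<rho> * (\<Sum>s\<in>S. mtrace (\<rho> (inv\<^bsub>G\<^esub> g) * (\<rho> (f s) * P \<rho>))) = 0" by simp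
        qed
        finally show ?thesis by simp
      qed
    qed
    then show "partial_bra S (uS S) \<psi> = (\<lambda>g. 0) \<and> success_prob G S \<psi> = 0"
      by (simp add: success_prob_def)
  qed
  show ?thesis using A B by blast
qed

end
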